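(* Let $G=(X,\Sigma,\delta,X_0)$ be an NFA with observable events $\Sigma_o$ and a nonempty set of secret states $X_S\subseteq X$, and let $K\in\mathbb N$. Then $G$ is $K$-SSO w.r.t. $\Sigma_o$ and $X_S$ if and only if $G$ is $\min\{K,\ |\hat X|\,2^{|X\setminus X_S|}-1\}$-SSO w.r.t. $\Sigma_o$ and $X_S$, where $\hat X$ is the set of states of $G$ reachable from $X_S$.
   Context: An NFA is $G=(X,\Sigma,\delta,X_0)$ with finite state set $X$, finite event set $\Sigma$, initial states $X_0\subseteq X$, and transition function $\delta:X\times\Sigma\to 2^X$ extended to strings in the usual way. $\Sigma=\Sigma_o\dot\cup\Sigma_{uo}$, and $P:\Sigma^*\to\Sigma_o^*$ is the natural projection erasing unobservable events. $X_{NS}=X\setminus X_S$. A run $x_0\xrightarrow{s_1}x_1\cdots\xrightarrow{s_n}x_n$ means $x_{k+1}\in\delta(x_k,s_{k+1})$, written $x_0\xrightarrow{s}x_n$; it is non-secret if all its states lie in $X_{NS}$. $\hat X$ is the set of states $x$ with $x\in\delta(x_s,w)$ for some $x_s\in X_S$, $w\in\Sigma^*$ (including $X_S$ itself). $K$-SSO: $G$ is strongly $K$-step opaque w.r.t. $\Sigma_o$ and $X_S$ if for every run $x_0\xrightarrow{s}x_s\xrightarrow{t}x_t$ with $x_0\in X_0$, $x_s\in X_S$, $|P(t)|\le K$, there exists a run $x_0'\xrightarrow{s'}x_s'\xrightarrow{t'}x_t'$ with $x_0'\in X_0$, $P(s')=P(s)$, $P(t')=P(t)$, and the subrun $x_s'\xrightarrow{t'}x_t'$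 non-secret. *)

theory Defs
  imports Main
begin

text \<open>An NFA G = (X, Sig, delta, X0). A run x_0 -s_1-> x_1 ... -s_n-> x_n is
represented by its list of states xs = [x_0,...,x_n] and its event string
s = [s_1,...,s_n], with x_{k+1} in delta x_k s_{k+1}.\<close>

definition is_nfa :: "'x set \<Rightarrow> 'e set \<Rightarrow> ('x \<Rightarrow> 'e \<Rightarrow> 'x set) \<Rightarrow> 'x set \<Rightarrow> bool" where
  "is_nfa X Sig delta X0 \<longleftrightarrow> finite X \<and> finite Sig \<and> X0 \<subseteq> X \<and>
     (\<forall>x\<in>X. \<forall>e\<in>Sig. delta x e \<subseteq> X)"

definition is_run :: "'x set \<Rightarrow> 'e set \<Rightarrow> ('x \<Rightarrow> 'e \<Rightarrow> 'x set) \<Rightarrow> 'x list \<Rightarrow> 'e list \<Rightarrow> bool" where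
  "is_run X Sig delta xs s \<longleftrightarrow> length xs = Suc (length s) \<and> set xs \<subseteq> X \<and> set s \<subseteq> Sig \<and>
     (\<forall>k < length s. xs ! Suc k \<in> delta (xs ! k) (s ! k))"

definition proj :: "'e set \<Rightarrow> 'e list \<Rightarrow> 'e list" where
  "proj Sigma_o s = filter (\<lambda>e. e \<in> Sigma_o) s"

fun delta_star :: "('x \<Rightarrow> 'e \<Rightarrow> 'x set) \<Rightarrow> 'x \<Rightarrow> 'e list \<Rightarrow> 'x set" where
  "delta_star delta x [] = {x}"
| "delta_star delta x (e # w) = (\<Union>y\<in>delta x e. delta_star delta y w)"

definition X_hat :: "'x set \<Rightarrow> 'e set \<Rightarrow> ('x \<Rightarrow> 'e \<Rightarrow> 'x set) \<Rightarrow> 'x set \<Rightarrow> 'x set" where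
  "X_hat X Sig delta X_S = {x. \<exists>xs\<in>X_S. \<exists>w\<in>lists Sig. x \<in> delta_star delta xs w}"

text \<open>Strong K-step opacity. A run x_0 -s-> x_s -t-> x_t is given by the state
list xs @ ys where xs = [x_0..x_s] (run over s) and x_s # ys (run over t).\<close>
definition K_SSO :: "'x set \<Rightarrow> 'e set \<Rightarrow> ('x \<Rightarrow> 'e \<Rightarrow> 'x set) \<Rightarrow> 'x set \<Rightarrow> 'e set \<Rightarrow> 'x set \<Rightarrow> nat \<Rightarrow> bool" where
  "K_SSO X Sig delta X0 Sigma_o X_S K \<longleftrightarrow>
    (\<forall>xs s ys t. is_run X Sig delta xs s \<and> is_run X Sig delta (last xs # ys) t \<and>
        hd xs \<in> X0 \<and> last xs \<in> X_S \<and> length (proj Sigma_o t) \<le> K \<longrightarrow>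
      (\<exists>xs' s' ys' t'. is_run X Sig delta xs' s' \<and> is_run X Sig delta (last xs' # ys') t' \<and>
        hd xs' \<in> X0 \<and> proj Sigma_o s' = proj Sigma_o s \<and> proj Sigma_o t' = proj Sigma_o t \<and>
        set (last xs' # ys') \<subseteq> X - X_S))"

end

theory Submission
  imports Defs
begin

lemma filter_split:
  "filter P t = b @ c \<Longrightarrow> \<exists>u v. t = u @ v \<and> filter P u = b \<and> filter P v = c"
proof (induction t arbitrary: b)
  case Nil then show ?case by auto
next
  case (Cons a t)
  show ?case
  proof (cases "P a")
    case True
    show ?thesis
    proof (cases b)
      case Nil then show ?thesis using Cons.prems by (intro exI[of _ "[]"] exI[of _ "a # t"]) auto
    next
      case (Cons b1 b')
      with Cons.prems True have "filter P t = b' @ c" "b1 = a" by auto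
      from Cons.IH[OF this(1)] obtain u v where "t = u @ v" "filter P u = b'" "filter P v = c" by blast
      then show ?thesis using True Cons \<open>b1 = a\<close> by (intro exI[of _ "a # u"] exI[of _ v]) auto
    qed
  next
    case False
    with Cons.prems have "filter P t = b @ c" by auto
    from Cons.IH[OF this] obtain u v where "t = u @ v" "filter P u = b" "filter P v = c" by blast
    then show ?thesis using False by (intro exI[of _ "a # u"] exI[of _ v]) auto
  qed
qed

lemma run_nonempty: "is_run X Sig delta xs s \<Longrightarrow> xs \<noteq> []"
  unfolding is_run_def by auto

lemma run_Nil: "is_run X Sig delta xs [] \<longleftrightarrow> (\<exists>x. xs = [x] \<and> x \<in> X)"
  unfolding is_run_def by (cases xs) auto

lemma run_Cons: "is_run X Sig delta xs (e # s) \<longleftrightarrow>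
  (\<exists>x ys. xs = x # ys \<and> x \<in> X \<and> e \<in> Sig \<and> hd ys \<in> delta x e \<and> is_run X Sig delta ys s)"
proof
  assume r: "is_run X Sig delta xs (e # s)"
  then obtain x ys where xs: "xs = x # ys" unfolding is_run_def by (cases xs) auto
  have ly: "length ys = Suc (length s)" using r xs unfolding is_run_def by auto
  have "hd ys = xs ! 1" using xs ly by (cases ys) auto
  moreover have "xs ! 1 \<in> delta (xs ! 0) e" using r unfolding is_run_def by fastforce
  moreover have "\<forall>k < length s. ys ! Suc k \<in> delta (ys ! k) (s ! k)"
  proof (intro allI impI)
    fix k assume "k < length s"
    then have "Suc k < length (e # s)" by simp
    then have "xs ! Suc (Suc k) \<in> delta (xs ! Suc k) ((e#s) ! Suc k)" using r unfolding is_run_def by blast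
    then show "ys ! Suc k \<in> delta (ys ! k) (s ! k)" using xs by simp
  qed
  ultimately show "\<exists>x ys. xs = x # ys \<and> x \<in> X \<and> e \<in> Sig \<and> hd ys \<in> delta x e \<and> is_run X Sig delta ys s"
    using r xs ly unfolding is_run_def by (intro exI[of _ x] exI[of _ ys]) auto
next
  assume "\<exists>x ys. xs = x # ys \<and> x \<in> X \<and> e \<in> Sig \<and> hd ys \<in> delta x e \<and> is_run X Sig delta ys s"
  then obtain x ys where h: "xs = x # ys" "x \<in> X" "e \<in> Sig" "hd ys \<in> delta x e" "is_run X Sig delta ys s" by blast
  have ne: "ys \<noteq> []" using h(5) by (rule run_nonempty)
  have "\<forall>k < length (e#s). xs ! Suc k \<in> delta (xs ! k) ((e#s) ! k)"
  proof (intro allI impI)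
    fix k assume k: "k < length (e#s)"
    show "xs ! Suc k \<in> delta (xs ! k) ((e#s) ! k)"
    proof (cases k)
      case 0 then show ?thesis using h ne by (simp add: hd_conv_nth)
    next
      case (Suc j) then show ?thesis using h k unfolding is_run_def by auto
    qed
  qed
  then show "is_run X Sig delta xs (e # s)" using h unfolding is_run_def by auto
qed

lemma run_append:
  "is_run X Sig delta xs s \<Longrightarrow> is_run X Sig delta (last xs # ys) t \<Longrightarrow> is_run X Sig delta (xs @ ys) (s @ t)"
proof (induction s arbitrary: xs)
  case Nil then show ?case by (auto simp: run_Nil)
next
  case (Cons e s)
  from Cons.prems(1) obtain x zs where h: "xs = x # zs" "x \<in> X" "e \<in> Sig" "hd zs \<in> delta x e"
     "is_run X Sig delta zs s" by (auto simp: run_Cons)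
  have ne: "zs \<noteq> []" using h(5) by (rule run_nonempty)
  have "is_run X Sig delta (zs @ ys) (s @ t)" using Cons.IH[OF h(5)] Cons.prems(2) h ne by simp
  then show ?case using h ne by (auto simp: run_Cons)
qed

lemma run_split:
  "is_run X Sig delta zs (s @ t) \<Longrightarrow> \<exists>xs ys. zs = xs @ ys \<and> is_run X Sig delta xs s \<and> is_run X Sig delta (last xs # ys) t"
proof (induction s arbitrary: zs)
  case Nil
  then obtain x ys where "zs = x # ys" using run_nonempty by (metis neq_Nil_conv)
  moreover have "x \<in> X" using Nil calculation unfolding is_run_def by auto
  ultimately show ?case using Nil by (intro exI[of _ "[x]"] exI[of _ ys]) (auto simp: run_Nil)
next
  case (Cons e s)
  from Cons.prems obtain x zs1 where h: "zs = x # zs1" "x \<in> X" "e \<in> Sig" "hd zs1 \<in> delta x e"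
     "is_run X Sig delta zs1 (s @ t)" by (auto simp: run_Cons)
  from Cons.IH[OF h(5)] obtain xs ys where g: "zs1 = xs @ ys" "is_run X Sig delta xs s" "is_run X Sig delta (last xs # ys) t" by blast
  have ne: "xs \<noteq> []" using g(2) by (rule run_nonempty)
  show ?case using h g ne by (intro exI[of _ "x # xs"] exI[of _ ys]) (auto simp: run_Cons)
qed

lemma run_hd: "is_run X Sig delta xs s \<Longrightarrow> hd xs \<in> X"
  using run_nonempty[of X Sig delta xs s] unfolding is_run_def by auto

lemma run_delta_star:
  "is_run X Sig delta xs s \<Longrightarrow> last xs \<in> delta_star delta (hd xs) s \<and> s \<in> lists Sig"
proof (induction s arbitrary: xs)
  case Nil then show ?case by (auto simp: run_Nil)
next
  case (Cons e s)
  from Cons.prems obtain x zs where h: "xs = x # zs" "x \<in> X" "e \<in> Sig" "hd zs \<in> delta x e"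
     "is_run X Sig delta zs s" by (auto simp: run_Cons)
  have ne: "zs \<noteq> []" using h(5) by (rule run_nonempty)
  show ?case using Cons.IH[OF h(5)] h ne by auto
qed

context
  fixes X :: "'x set" and Sig Sigma_o :: "'e set" and delta :: "'x \<Rightarrow> 'e \<Rightarrow> 'x set"
    and X0 X_S :: "'x set"
begin

definition Start :: "'e list \<Rightarrow> 'x set" where
  "Start a = {x. \<exists>xs s. is_run X Sig delta xs s \<and> hd xs \<in> X0 \<and> proj Sigma_o s = a \<and> last xs = x}"

definition NS :: "'x set \<Rightarrow> 'e list \<Rightarrow> 'x set" where
  "NS Q b = {y. \<exists>x\<in>Q. \<exists>zs t. is_run X Sig delta (x # zs) t \<and> proj Sigma_o t = b \<and>
      set (x # zs) \<subseteq> X - X_S \<and> last (x # zs) = y}"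

lemma NS_sub: "NS Q b \<subseteq> X - X_S"
proof
  fix y assume "y \<in> NS Q b"
  then obtain x zs t where "set (x # zs) \<subseteq> X - X_S" "last (x # zs) = y" unfolding NS_def by blast
  moreover have "last (x # zs) \<in> set (x # zs)" by (rule last_in_set) simp
  ultimately show "y \<in> X - X_S" by blast
qed

lemma NS_append: "NS Q (b @ c) = NS (NS Q b) c"
proof
  show "NS Q (b @ c) \<subseteq> NS (NS Q b) c"
  proof
    fix y assume "y \<in> NS Q (b @ c)"
    then obtain x zs t where h: "x \<in> Q" "is_run X Sig delta (x # zs) t" "proj Sigma_o t = b @ c"
      "set (x # zs) \<subseteq> X - X_S" "last (x # zs) = y" unfolding NS_def by blast
    from h(3) obtain u v where uv: "t = u @ v" "proj Sigma_o u = b" "proj Sigma_o v = c"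
      unfolding proj_def using filter_split by blast
    from run_split[of X Sig delta "x # zs" u v] h(2) uv(1) obtain A B where
      AB: "x # zs = A @ B" "is_run X Sig delta A u" "is_run X Sig delta (last A # B) v" by blast
    have ne: "A \<noteq> []" using AB(2) by (rule run_nonempty)
    then obtain A' where A': "A = x # A'" using AB(1) by (cases A) auto
    have "last A \<in> NS Q b" unfolding NS_def
      using h AB uv A' by (intro CollectI bexI[of _ x] exI[of _ A'] exI[of _ u]) auto
    moreover have "set (last A # B) \<subseteq> X - X_S" using h(4) AB(1) last_in_set[OF ne] by auto
    moreover have "last (last A # B) = y" using h(5) AB(1) ne by (cases B) auto
    ultimately show "y \<in> NS (NS Q b) c" unfolding NS_def[of "NS Q b" c]
      using AB uv by (intro CollectI bexI[of _ "last A"] exI[of _ B] exI[of _ v]) auto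
  qed
next
  show "NS (NS Q b) c \<subseteq> NS Q (b @ c)"
  proof
    fix y assume "y \<in> NS (NS Q b) c"
    then obtain z zs2 v where h: "z \<in> NS Q b" "is_run X Sig delta (z # zs2) v" "proj Sigma_o v = c"
      "set (z # zs2) \<subseteq> X - X_S" "last (z # zs2) = y" unfolding NS_def by blast
    from h(1) obtain x zs1 u where g: "x \<in> Q" "is_run X Sig delta (x # zs1) u" "proj Sigma_o u = b"
      "set (x # zs1) \<subseteq> X - X_S" "last (x # zs1) = z" unfolding NS_def by blast
    have r: "is_run X Sig delta ((x # zs1) @ zs2) (u @ v)" using run_append[OF g(2)] h(2) g(5) by simp
    have "last ((x # zs1) @ zs2) = y" using h(5) g(5) by (cases zs2) auto
    then show "y \<in> NS Q (b @ c)" unfolding NS_def using r g h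
      by (intro CollectI bexI[of _ x] exI[of _ "zs1 @ zs2"] exI[of _ "u @ v"]) (auto simp: proj_def)
  qed
qed

lemma wit_to_NS:
  assumes "is_run X Sig delta xs' s'" "is_run X Sig delta (last xs' # ys') t'"
        "hd xs' \<in> X0" "proj Sigma_o s' = a" "proj Sigma_o t' = b" "set (last xs' # ys') \<subseteq> X - X_S"
  shows "NS (Start a) b \<noteq> {}"
proof -
  have "last xs' \<in> Start a" unfolding Start_def using assms by blast
  then have "last (last xs' # ys') \<in> NS (Start a) b" unfolding NS_def using assms by blast
  then show ?thesis by blast
qed

lemma NS_to_wit:
  assumes "NS (Start a) b \<noteq> {}"
  shows "\<exists>xs' s' ys' t'. is_run X Sig delta xs' s' \<and> is_run X Sig delta (last xs' # ys') t' \<and>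
        hd xs' \<in> X0 \<and> proj Sigma_o s' = a \<and> proj Sigma_o t' = b \<and> set (last xs' # ys') \<subseteq> X - X_S"
proof -
  from assms obtain y where "y \<in> NS (Start a) b" by blast
  then obtain x zs t where h: "x \<in> Start a" "is_run X Sig delta (x # zs) t" "proj Sigma_o t = b"
      "set (x # zs) \<subseteq> X - X_S" unfolding NS_def by blast
  from h(1) obtain xs s where g: "is_run X Sig delta xs s" "hd xs \<in> X0" "proj Sigma_o s = a" "last xs = x"
    unfolding Start_def by blast
  show ?thesis using h g by blast
qed


lemma delta_star_sub:
  assumes "is_nfa X Sig delta X0" "x \<in> X" "w \<in> lists Sig"
  shows "delta_star delta x w \<subseteq> X"
  using assms(2,3)
proof (induction w arbitrary: x)
  case Nil then show ?case by simp
next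
  case (Cons e w)
  have "delta x e \<subseteq> X" using assms(1) Cons.prems unfolding is_nfa_def by auto
  then show ?case using Cons by auto
qed

lemma main_lemma:
  assumes nfa: "is_nfa X Sig delta X0" and XS: "X_S \<subseteq> X" "X_S \<noteq> {}"
    and N: "K_SSO X Sig delta X0 Sigma_o X_S (card (X_hat X Sig delta X_S) * 2 ^ card (X - X_S) - 1)"
  shows "\<forall>xs s ys t. is_run X Sig delta xs s \<and> is_run X Sig delta (last xs # ys) t \<and>
        hd xs \<in> X0 \<and> last xs \<in> X_S \<and> length (proj Sigma_o t) = m \<longrightarrow>
        NS (Start (proj Sigma_o s)) (proj Sigma_o t) \<noteq> {}"
proof (induction m rule: less_induct)
  case (less m)
  define Xh where "Xh = X_hat X Sig delta X_S"
  define N where "N = card Xh * 2 ^ card (X - X_S) - 1"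
  have finX: "finite X" using nfa unfolding is_nfa_def by auto
  have XhX: "Xh \<subseteq> X"
    unfolding Xh_def X_hat_def using delta_star_sub[OF nfa] XS(1) by blast
  have finXh: "finite Xh" using XhX finX finite_subset by blast
  have XSXh: "X_S \<subseteq> Xh" unfolding Xh_def X_hat_def
  proof
    fix x assume "x \<in> X_S"
    then show "x \<in> {x. \<exists>xs\<in>X_S. \<exists>w\<in>lists Sig. x \<in> delta_star delta xs w}"
      by (intro CollectI bexI[of _ x] bexI[of _ "[]"]) auto
  qed
  have cXh: "card Xh \<ge> 1" using XSXh XS(2) finXh
    by (metis One_nat_def Suc_leI card_gt_0_iff subset_empty)
  have N1: "N + 1 = card Xh * 2 ^ card (X - X_S)" unfolding N_def using cXh
    by (simp add: Suc_leI)
  show ?case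
  proof (intro allI impI)
    fix xs s ys t
    assume H: "is_run X Sig delta xs s \<and> is_run X Sig delta (last xs # ys) t \<and>
        hd xs \<in> X0 \<and> last xs \<in> X_S \<and> length (proj Sigma_o t) = m"
    define w where "w = proj Sigma_o t"
    define R where "R = last xs # ys"
    define Q0 where "Q0 = Start (proj Sigma_o s)"
    show "NS (Start (proj Sigma_o s)) (proj Sigma_o t) \<noteq> {}"
    proof (cases "m \<le> N")
      case True
      then obtain xs' s' ys' t' where "is_run X Sig delta xs' s'" "is_run X Sig delta (last xs' # ys') t'"
        "hd xs' \<in> X0" "proj Sigma_o s' = proj Sigma_o s" "proj Sigma_o t' = proj Sigma_o t"
        "set (last xs' # ys') \<subseteq> X - X_S"
        using N H unfolding K_SSO_def N_def Xh_def by blast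
      then show ?thesis by (rule wit_to_NS)
    next
      case False
      have dec: "\<forall>i\<in>{0..m}. \<exists>c. t = fst c @ fst (snd c) \<and> proj Sigma_o (fst c) = take i w \<and>
          proj Sigma_o (fst (snd c)) = drop i w \<and> R = fst (snd (snd c)) @ snd (snd (snd c)) \<and>
          is_run X Sig delta (fst (snd (snd c))) (fst c) \<and>
          is_run X Sig delta (last (fst (snd (snd c))) # snd (snd (snd c))) (fst (snd c))"
      proof
        fix i assume "i \<in> {0..m}"
        have "filter (\<lambda>e. e \<in> Sigma_o) t = take i w @ drop i w" unfolding w_def proj_def by simp
        from filter_split[OF this] obtain t1 t2 where tt: "t = t1 @ t2" "proj Sigma_o t1 = take i w"
          "proj Sigma_o t2 = drop i w" unfolding proj_def by blast
        from H tt(1) have "is_run X Sig delta R (t1 @ t2)" unfolding R_def by simp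
        from run_split[OF this] obtain A B where "R = A @ B" "is_run X Sig delta A t1"
          "is_run X Sig delta (last A # B) t2" by blast
        then show "\<exists>c. t = fst c @ fst (snd c) \<and> proj Sigma_o (fst c) = take i w \<and>
          proj Sigma_o (fst (snd c)) = drop i w \<and> R = fst (snd (snd c)) @ snd (snd (snd c)) \<and>
          is_run X Sig delta (fst (snd (snd c))) (fst c) \<and>
          is_run X Sig delta (last (fst (snd (snd c))) # snd (snd (snd c))) (fst (snd c))"
          using tt by (intro exI[of _ "(t1, t2, A, B)"]) simp
      qed
      from bchoice[OF dec] obtain f where f: "\<forall>i\<in>{0..m}. t = fst (f i) @ fst (snd (f i)) \<and>
          proj Sigma_o (fst (f i)) = take i w \<and>
          proj Sigma_o (fst (snd (f i))) = drop i w \<and> R = fst (snd (snd (f i))) @ snd (snd (snd (f i))) \<and>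
          is_run X Sig delta (fst (snd (snd (f i)))) (fst (f i)) \<and>
          is_run X Sig delta (last (fst (snd (snd (f i)))) # snd (snd (snd (f i)))) (fst (snd (f i)))"
        by blast
      define T1 where "T1 i = fst (f i)" for i
      define T2 where "T2 i = fst (snd (f i))" for i
      define AA where "AA i = fst (snd (snd (f i)))" for i
      define BB where "BB i = snd (snd (snd (f i)))" for i
      have F: "\<And>i. i \<in> {0..m} \<Longrightarrow> proj Sigma_o (T1 i) = take i w \<and> proj Sigma_o (T2 i) = drop i w \<and>
          R = AA i @ BB i \<and> is_run X Sig delta (AA i) (T1 i) \<and>
          is_run X Sig delta (last (AA i) # BB i) (T2 i)"
        using f unfolding T1_def T2_def AA_def BB_def by blast
      have hdA: "\<And>i. i \<in> {0..m} \<Longrightarrow> AA i = last xs # tl (AA i)"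
      proof -
        fix i assume i: "i \<in> {0..m}"
        have "AA i \<noteq> []" using F[OF i] run_nonempty by blast
        then show "AA i = last xs # tl (AA i)" using F[OF i] unfolding R_def
          by (cases "AA i") auto
      qed
      define g where "g i = (last (AA i), NS Q0 (take i w))" for i
      have gsub: "g ` {0..m} \<subseteq> Xh \<times> Pow (X - X_S)"
      proof
        fix z assume "z \<in> g ` {0..m}"
        then obtain i where i: "i \<in> {0..m}" and z: "z = g i" by blast
        have r: "is_run X Sig delta (AA i) (T1 i)" using F[OF i] by blast
        have "last (AA i) \<in> delta_star delta (hd (AA i)) (T1 i)" "T1 i \<in> lists Sig"
          using run_delta_star[OF r] by auto
        moreover have "hd (AA i) = last xs" using hdA[OF i] by (metis list.sel(1))
        ultimately have "last (AA i) \<in> Xh" unfolding Xh_def X_hat_def using H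
          by (intro CollectI bexI[of _ "last xs"] bexI[of _ "T1 i"]) auto
        then show "z \<in> Xh \<times> Pow (X - X_S)" unfolding z g_def using NS_sub by auto
      qed
      have fin: "finite (Xh \<times> Pow (X - X_S))" using finXh finX by auto
      have cardT: "card (Xh \<times> Pow (X - X_S)) = N + 1"
        using N1 finX by (simp add: card_cartesian_product card_Pow)
      have "\<not> inj_on g {0..m}"
      proof
        assume "inj_on g {0..m}"
        then have "card (g ` {0..m}) = m + 1" by (simp add: card_image)
        moreover have "card (g ` {0..m}) \<le> N + 1" using card_mono[OF fin gsub] cardT by simp
        ultimately show False using False by simp
      qed
      then obtain i0 j0 where ij0: "i0 \<in> {0..m}" "j0 \<in> {0..m}" "i0 \<noteq> j0" "g i0 = g j0"
        unfolding inj_on_def by blast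
      obtain i j where ij: "i \<in> {0..m}" "j \<in> {0..m}" "i < j" "g i = g j"
      proof (cases "i0 < j0")
        case True then show ?thesis using that ij0 by blast
      next
        case False then have "j0 < i0" using ij0(3) by simp
        then show ?thesis using that ij0 by (metis)
      qed
      have eqlast: "last (AA i) = last (AA j)" and eqQ: "NS Q0 (take i w) = NS Q0 (take j w)"
        using ij(4) unfolding g_def by auto
      define t' where "t' = T1 i @ T2 j"
      define ys' where "ys' = tl (AA i) @ BB j"
      have r1: "is_run X Sig delta (AA i) (T1 i)" using F[OF ij(1)] by blast
      have r2: "is_run X Sig delta (last (AA i) # BB j) (T2 j)" using F[OF ij(2)] eqlast by simp
      have "is_run X Sig delta (AA i @ BB j) t'" unfolding t'_def by (rule run_append[OF r1 r2])
      moreover have "AA i @ BB j = last xs # ys'" unfolding ys'_def using hdA[OF ij(1)]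
        by (metis append_Cons)
      ultimately have rt': "is_run X Sig delta (last xs # ys') t'" by simp
      have pt': "proj Sigma_o t' = take i w @ drop j w" unfolding t'_def
        using F[OF ij(1)] F[OF ij(2)] by (simp add: proj_def)
      have lw: "length w = m" using H unfolding w_def by simp
      have "length (proj Sigma_o t') < m" using pt' lw ij by auto
      from less[OF this] H rt' have "NS Q0 (proj Sigma_o t') \<noteq> {}" unfolding Q0_def by blast
      then have "NS (NS Q0 (take i w)) (drop j w) \<noteq> {}" using pt' NS_append by simp
      then have "NS (NS Q0 (take j w)) (drop j w) \<noteq> {}" using eqQ by simp
      then have "NS Q0 (take j w @ drop j w) \<noteq> {}" using NS_append[of Q0 "take j w" "drop j w"] by simp
      then show ?thesis unfolding Q0_def w_def by simp
    qed
  qed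
qed
end


lemma K_SSO_mono: "K_SSO X Sig delta X0 Sigma_o X_S K \<Longrightarrow> K' \<le> K \<Longrightarrow> K_SSO X Sig delta X0 Sigma_o X_S K'"
  unfolding K_SSO_def using le_trans by blast

theorem corollary3p1:
  fixes X :: "'x set" and Sig Sigma_o :: "'e set" and delta :: "'x \<Rightarrow> 'e \<Rightarrow> 'x set"
    and X0 X_S :: "'x set" and K :: nat
  assumes "is_nfa X Sig delta X0"
    and "Sigma_o \<subseteq> Sig"
    and "X_S \<subseteq> X" and "X_S \<noteq> {}"
  shows "K_SSO X Sig delta X0 Sigma_o X_S K \<longleftrightarrow>
         K_SSO X Sig delta X0 Sigma_o X_S
           (min K (card (X_hat X Sig delta X_S) * 2 ^ card (X - X_S) - 1))"
proof
  assume "K_SSO X Sig delta X0 Sigma_o X_S K"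
  then show "K_SSO X Sig delta X0 Sigma_o X_S (min K (card (X_hat X Sig delta X_S) * 2 ^ card (X - X_S) - 1))"
    by (rule K_SSO_mono) simp
next
  define N where "N = card (X_hat X Sig delta X_S) * 2 ^ card (X - X_S) - 1"
  assume A: "K_SSO X Sig delta X0 Sigma_o X_S (min K (card (X_hat X Sig delta X_S) * 2 ^ card (X - X_S) - 1))"
  show "K_SSO X Sig delta X0 Sigma_o X_S K"
  proof (cases "K \<le> N")
    case True then show ?thesis using A unfolding N_def by (simp add: min_def)
  next
    case False
    then have AN: "K_SSO X Sig delta X0 Sigma_o X_S N" using A unfolding N_def by (simp add: min_def)
    show ?thesis unfolding K_SSO_def
    proof (intro allI impI)
      fix xs s ys t
      assume H: "is_run X Sig delta xs s \<and> is_run X Sig delta (last xs # ys) t \<and>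
        hd xs \<in> X0 \<and> last xs \<in> X_S \<and> length (proj Sigma_o t) \<le> K"
      have "NS X Sig Sigma_o delta X_S (Start X Sig Sigma_o delta X0 (proj Sigma_o s)) (proj Sigma_o t) \<noteq> {}"
        using main_lemma[OF assms(1,3,4) AN[unfolded N_def], of "length (proj Sigma_o t)"] H by blast
      then show "\<exists>xs' s' ys' t'. is_run X Sig delta xs' s' \<and> is_run X Sig delta (last xs' # ys') t' \<and>
        hd xs' \<in> X0 \<and> proj Sigma_o s' = proj Sigma_o s \<and> proj Sigma_o t' = proj Sigma_o t \<and>
        set (last xs' # ys') \<subseteq> X - X_S" by (rule NS_to_wit)
    qed
  qed
qed

end
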